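(* For all integers $n\geq 1$ and $1\le i\le\lfloor n/2\rfloor$, we have $(i+1)\gamma_i(B_{n-1})\le\gamma_i(B_n)$.
   Context: $B_n$ denotes the group of signed permutations: bijections $\sigma$ of $\{\pm1,\dots,\pm n\}$ with $\sigma(-i)=-\sigma(i)$, written $\sigma=\sigma_1\cdots\sigma_n$ with $\sigma_i=\sigma(i)$. With $\sigma_0=0$, $\mathrm{des}_B(\sigma)=|\{i\in\{0,\dots,n-1\}:\sigma_i>\sigma_{i+1}\}|$. The type $B$ Eulerian polynomial $B_n(t)=\sum_{\sigma\in B_n}t^{\mathrm{des}_B(\sigma)}$ satisfies $B_n(t)=t^nB_n(1/t)$, so $B_n(t)=\sum_{i=0}^{\lfloor n/2\rfloor}\gamma_i(B_n)t^i(1+t)^{n-2i}$ for unique integers $\gamma_i(B_n)$; set $\gamma_i(B_n)=0$ for $i>\lfloor n/2\rfloor$. *)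

theory Defs
  imports "HOL-Computational_Algebra.Polynomial" "HOL-Combinatorics.Permutations"
begin

text \<open>Signed permutations of [n]: bijections sigma of {-n..n}-{0} (extended by the identity
  elsewhere, so sigma 0 = 0) with sigma(-i) = -sigma(i).\<close>
definition signed_perms :: "nat \<Rightarrow> (int \<Rightarrow> int) set" where
  "signed_perms n = {\<sigma>. \<sigma> permutes ({- int n..int n} - {0}) \<and> (\<forall>i. \<sigma> (- i) = - \<sigma> i)}"

text \<open>Type B descent number, with sigma_0 = 0.\<close>
definition desB :: "nat \<Rightarrow> (int \<Rightarrow> int) \<Rightarrow> nat" where
  "desB n \<sigma> = card {i \<in> {0..<n}. \<sigma> (int i) > \<sigma> (int i + 1)}"

definition eulerB :: "nat \<Rightarrow> int poly" where
  "eulerB n = (\<Sum>\<sigma>\<in>signed_perms n. monom 1 (desB n \<sigma>))"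

definition is_gamma_vector :: "nat \<Rightarrow> int poly \<Rightarrow> (nat \<Rightarrow> int) \<Rightarrow> bool" where
  "is_gamma_vector n p g \<longleftrightarrow> (\<forall>i > n div 2. g i = 0) \<and>
     p = (\<Sum>i\<le>n div 2. smult (g i) (monom 1 i * [:1, 1:] ^ (n - 2 * i)))"

definition gammaB :: "nat \<Rightarrow> nat \<Rightarrow> int" where
  "gammaB n i = (THE g. is_gamma_vector n (eulerB n) g) i"

end

theory Submission
  imports Defs
begin


definition X :: "int poly" where "X = [:0,1:]"

lemma pderiv_X[simp]: "pderiv X = 1"
  by (simp add: X_def pderiv_pCons)

lemma X_ne[simp]: "X \<noteq> 0" by (simp add: X_def)
lemma U_ne[simp]: "1 + X \<noteq> 0"
proof
  assume "1 + X = 0"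
  hence "coeff (1 + X) 1 = 0" by simp
  thus False by (simp add: X_def)
qed

lemma smult_of_nat: "smult (int k) p = of_nat k * p"
  by (simp add: of_nat_poly)

definition TT :: "nat \<Rightarrow> int poly \<Rightarrow> int poly" where
  "TT N p = (1 + of_nat (2*N - 1) * X) * p + 2 * (1 - X) * (X * pderiv p)"

lemma pderiv_sum': "pderiv (sum f A) = (\<Sum>a\<in>A. pderiv (f a))"
  using higher_pderiv_sum[of 1 f A] by simp

lemma TT_sum: "TT N (sum f A) = (\<Sum>a\<in>A. TT N (f a))"
  by (simp add: TT_def pderiv_sum' sum_distrib_left sum.distrib)

lemma smult_as_mult: "smult c p = [:c:] * p" by simp

lemma TT_smult: "TT N (smult c p) = smult c (TT N p)"
  unfolding TT_def pderiv_smult by (simp only: smult_as_mult) algebra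

lemma x_pderiv_xpow: "X * pderiv (X ^ d) = of_nat d * X ^ d"
proof (cases d)
  case 0 then show ?thesis by simp
next
  case (Suc e) then show ?thesis
    by (simp only: pderiv_power_Suc pderiv_X smult_of_nat of_nat_Suc[symmetric]) (simp add: mult_ac)
qed

lemma u_pderiv_upow: "(1 + X) * pderiv ((1 + X) ^ d) = of_nat d * (1 + X) ^ d"
proof (cases d)
  case 0 then show ?thesis by simp
next
  case (Suc e) then show ?thesis
    by (simp only: pderiv_power_Suc pderiv_add pderiv_X smult_of_nat of_nat_Suc[symmetric]) (simp add: mult_ac)
qed

lemma TT_xpow:
  assumes "d \<le> m"
  shows "TT (Suc m) (X ^ d) = of_nat (2*d+1) * X ^ d + of_nat (2*(m-d)+1) * X ^ Suc d"
proof -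
  have "TT (Suc m) (X ^ d) = (1 + of_nat (2*m+1) * X) * X^d + 2 * (1 - X) * (of_nat d * X ^ d)"
    by (simp add: TT_def x_pderiv_xpow)
  also have "\<dots> = of_nat (2*d+1) * X ^ d + of_nat (2*(m-d)+1) * X ^ Suc d"
  proof -
    obtain k where k: "m = d + k" using assms le_Suc_ex by blast
    show ?thesis by (simp add: k algebra_simps)
  qed
  finally show ?thesis .
qed

lemma TT_gamma:
  "TT (m + 2*i + 1) (X^i * (1+X)^m) =
     of_nat (2*i+1) * (X^i * (1+X)^(m+1)) + of_nat (4*m) * (X^(i+1) * (1+X)^(m-1))"
proof -
  let ?N = "m + 2*i + 1"
  let ?U = "1 + X"
  have pd: "?U * (X * pderiv (X^i * ?U^m)) = of_nat i * ?U * (X^i * ?U^m) + of_nat m * X * (X^i * ?U^m)"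
  proof -
    have "?U * (X * pderiv (X^i * ?U^m)) = ?U * ?U^m * (X * pderiv (X^i)) + X * X^i * (?U * pderiv (?U^m))"
      by (simp only: pderiv_mult) (simp add: algebra_simps)
    also have "\<dots> = of_nat i * ?U * (X^i * ?U^m) + of_nat m * X * (X^i * ?U^m)"
      by (simp only: x_pderiv_xpow u_pderiv_upow) (simp add: algebra_simps)
    finally show ?thesis .
  qed
  have "?U * TT ?N (X^i * ?U^m) = ?U * (1 + of_nat (2*?N - 1) * X) * (X^i * ?U^m)
        + 2 * (1 - X) * (?U * (X * pderiv (X^i * ?U^m)))"
    by (simp add: TT_def algebra_simps)
  also have "\<dots> = (?U * (1 + of_nat (2*?N - 1) * X) + 2 * (1 - X) * (of_nat i * ?U + of_nat m * X)) * (X^i * ?U^m)"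
    by (simp only: pd) (simp add: algebra_simps)
  also have "?U * (1 + of_nat (2*?N - 1) * X) + 2 * (1 - X) * (of_nat i * ?U + of_nat m * X)
      = of_nat (2*i+1) * ?U * ?U + of_nat (4*m) * X"
    by (simp add: algebra_simps)
  also have "(of_nat (2*i+1) * ?U * ?U + of_nat (4*m) * X) * (X^i * ?U^m) =
     ?U * (of_nat (2*i+1) * (X^i * ?U^(m+1)) + of_nat (4*m) * (X^(i+1) * ?U^(m-1)))"
    by (cases m) (simp_all add: algebra_simps)
  finally show ?thesis by (simp only: mult_cancel_left U_ne) simp
qed




fun gg :: "nat \<Rightarrow> nat \<Rightarrow> int" where
  "gg 0 i = (if i = 0 then 1 else 0)"
| "gg (Suc m) i = int (2*i+1) * gg m i + (if i = 0 then 0 else 4 * (int m + 2 - 2 * int i) * gg m (i - 1))"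

lemma gg_props: "(i > n div 2 \<longrightarrow> gg n i = 0) \<and> gg n i \<ge> 0"
proof (induction n arbitrary: i)
  case 0 then show ?case by simp
next
  case (Suc m)
  have z1: "i > Suc m div 2 \<Longrightarrow> gg m i = 0" using Suc[of i] by auto
  have z2: "i > Suc m div 2 \<Longrightarrow> i \<noteq> 0 \<Longrightarrow> (int m + 2 - 2 * int i) * gg m (i - 1) = 0"
  proof -
    assume a: "i > Suc m div 2" "i \<noteq> 0"
    show ?thesis
    proof (cases "i - 1 > m div 2")
      case True then show ?thesis using Suc[of "i-1"] by simp
    next
      case False
      with a have "int m + 2 - 2 * int i = 0" by linarith
      then show ?thesis by simp
    qed
  qed
  have nn: "i \<noteq> 0 \<Longrightarrow> (int m + 2 - 2 * int i) * gg m (i - 1) \<ge> 0"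
  proof -
    assume a: "i \<noteq> 0"
    show ?thesis
    proof (cases "i - 1 > m div 2")
      case True then show ?thesis using Suc[of "i-1"] by simp
    next
      case False
      with a have "int m + 2 - 2 * int i \<ge> 0" by linarith
      then show ?thesis using Suc[of "i-1"] by simp
    qed
  qed
  have G: "gg (Suc m) i = int (2*i+1) * gg m i + (if i = 0 then 0 else 4 * ((int m + 2 - 2 * int i) * gg m (i - 1)))"
    by simp
  have "int (2*i+1) * gg m i \<ge> 0" using Suc[of i] by simp
  then show ?case
    using z1 z2 nn unfolding G by auto
qed

lemma gg_zero: "i > n div 2 \<Longrightarrow> gg n i = 0" using gg_props by blast
lemma gg_nonneg: "gg n i \<ge> 0" using gg_props by blast

definition QQ :: "nat \<Rightarrow> int poly" where
  "QQ n = (\<Sum>i\<le>n. smult (gg n i) (X^i * (1+X)^(n - 2*i)))"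

lemma QQ_term:
  "smult (gg m i) (TT (Suc m) (X^i * (1+X)^(m - 2*i))) =
     smult (int (2*i+1) * gg m i) (X^i * (1+X)^(Suc m - 2*i)) +
     smult (4 * (int m - 2 * int i) * gg m i) (X^Suc i * (1+X)^(Suc m - 2*Suc i))"
proof (cases "2*i \<le> m")
  case True
  have e: "Suc m = (m - 2*i) + 2*i + 1" using True by simp
  have "TT (Suc m) (X^i * (1+X)^(m - 2*i)) = of_nat (2*i+1) * (X^i * (1+X)^(m - 2*i+1)) + of_nat (4*(m-2*i)) * (X^(i+1) * (1+X)^(m - 2*i-1))"
    by (subst e, rule TT_gamma)
  moreover have e1: "m - 2*i+1 = Suc m - 2*i" and e2: "m - 2*i - 1 = Suc m - 2*Suc i" using True by auto
  ultimately have T: "TT (Suc m) (X^i * (1+X)^(m - 2*i)) = of_nat (2*i+1) * (X^i * (1+X)^(Suc m - 2*i)) + of_nat (4*(m-2*i)) * (X^(i+1) * (1+X)^(Suc m - 2*Suc i))"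
    by (subst e1[symmetric], subst e2[symmetric])
  have c: "int (m - 2*i) = int m - 2 * int i" using True by simp
  have c4: "int (4*(m - 2*i)) = 4 * (int m - 2 * int i)" using True by simp
  show ?thesis unfolding T smult_of_nat[symmetric] smult_add_right smult_smult c4
    by (simp add: mult_ac)
next
  case False
  then have "gg m i = 0" using gg_zero by auto
  then show ?thesis by simp
qed

lemma QQ_Suc: "QQ (Suc m) = TT (Suc m) (QQ m)"
proof -
  let ?Y = "\<lambda>i. X^i * (1+X)^(Suc m - 2*i)"
  have "TT (Suc m) (QQ m) = (\<Sum>i\<le>m. smult (int (2*i+1) * gg m i) (?Y i)) +
           (\<Sum>i\<le>m. smult (4 * (int m - 2 * int i) * gg m i) (?Y (Suc i)))"
    unfolding QQ_def TT_sum TT_smult QQ_term sum.distrib by simp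
  also have "(\<Sum>i\<le>m. smult (int (2*i+1) * gg m i) (?Y i)) = (\<Sum>i\<le>Suc m. smult (int (2*i+1) * gg m i) (?Y i))"
    using gg_zero[of m "Suc m"] by simp
  also have "(\<Sum>i\<le>m. smult (4 * (int m - 2 * int i) * gg m i) (?Y (Suc i))) =
      (\<Sum>i\<le>Suc m. smult (if i = 0 then 0 else 4 * (int m + 2 - 2 * int i) * gg m (i - 1)) (?Y i))"
    by (subst sum.atMost_Suc_shift) (simp add: algebra_simps)
  also have "(\<Sum>i\<le>Suc m. smult (int (2*i+1) * gg m i) (?Y i)) + \<dots> = QQ (Suc m)"
    unfolding QQ_def by (simp add: smult_add_left sum.distrib)
  finally show ?thesis by simp
qed

lemma Z_conv: "monom 1 i * [:1,1:]^k = X^i * (1+X)^k"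
proof -
  have "[:1,1:] = 1 + X" by (simp add: X_def one_pCons)
  then show ?thesis by (simp add: monom_altdef X_def)
qed

lemma gamma_unique:
  assumes "is_gamma_vector n p c" "is_gamma_vector n p d"
  shows "c = d"
proof -
  let ?Z = "\<lambda>j. monom 1 j * [:1::int,1:]^(n - 2*j)"
  define e where "e = (\<lambda>j. c j - d j)"
  have S: "(\<Sum>j\<le>n div 2. smult (e j) (?Z j)) = 0"
    using assms unfolding is_gamma_vector_def e_def
    by (simp add: smult_diff_left sum_subtractf)
  have "e i = 0" for i
  proof (induction i rule: less_induct)
    case (less i)
    show ?case
    proof (cases "i > n div 2")
      case True then show ?thesis using assms unfolding is_gamma_vector_def e_def by simp
    next
      case False
      have "0 = coeff (\<Sum>j\<le>n div 2. smult (e j) (?Z j)) i" using S by simp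
      also have "\<dots> = (\<Sum>j\<le>n div 2. e j * coeff (?Z j) i)" by (simp add: coeff_sum)
      also have "\<dots> = (\<Sum>j\<le>n div 2. if j = i then e i else 0)"
      proof (rule sum.cong)
        fix j assume "j \<in> {..n div 2}"
        show "e j * coeff (?Z j) i = (if j = i then e i else 0)"
          using less[of j] by (auto simp: coeff_monom_mult coeff_0_power)
      qed simp
      also have "\<dots> = e i" using False by simp
      finally show ?thesis by simp
    qed
  qed
  then show ?thesis unfolding e_def by auto
qed

lemma eulerB_QQ_gamma:
  assumes "eulerB n = QQ n"
  shows "gammaB n = gg n"
proof -
  have g: "is_gamma_vector n (eulerB n) (gg n)"
    unfolding is_gamma_vector_def
  proof
    show "\<forall>i>n div 2. gg n i = 0" using gg_zero by blast
    have "QQ n = (\<Sum>i\<le>n div 2. smult (gg n i) (X^i * (1+X)^(n - 2*i)))"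
      unfolding QQ_def by (rule sum.mono_neutral_right) (auto simp: gg_zero)
    then show "eulerB n = (\<Sum>i\<le>n div 2. smult (gg n i) (monom 1 i * [:1, 1:] ^ (n - 2 * i)))"
      using assms by (simp add: Z_conv)
  qed
  have "(THE g. is_gamma_vector n (eulerB n) g) = gg n"
    by (rule the_equality) (use g gamma_unique in blast)+
  then show ?thesis unfolding gammaB_def by simp
qed




fun desL :: "int list \<Rightarrow> nat" where
  "desL (a # b # r) = (if b < a then 1 else 0) + desL (b # r)"
| "desL _ = 0"

lemma desL_lt: "v \<noteq> [] \<Longrightarrow> desL v < length v"
  by (induction v rule: desL.induct) auto

definition insA :: "int list \<Rightarrow> nat \<Rightarrow> int \<Rightarrow> int list" where
  "insA v j y = take (Suc j) v @ y # drop (Suc j) v"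

lemma insA_0: "insA (a # v) 0 y = a # y # v" by (simp add: insA_def)
lemma insA_Suc: "insA (a # v) (Suc j) y = a # insA v j y" by (simp add: insA_def)
lemma insA_Cons_hd: "\<exists>t. insA (b # r) j y = b # t" by (simp add: insA_def)

lemma ins_sum:
  assumes "v \<noteq> []" "\<forall>a\<in>set v. - N < a \<and> a < N"
  shows "(\<Sum>j<length v. X ^ desL (insA v j N) + X ^ desL (insA v j (-N))) =
     of_nat (2 * desL v + 1) * X ^ desL v + of_nat (2 * (length v - 1 - desL v) + 1) * X ^ Suc (desL v)"
  using assms
proof (induction v)
  case Nil then show ?case by simp
next
  case (Cons a v')
  show ?case
  proof (cases v')
    case Nil
    with Cons.prems show ?thesis by (simp add: insA_def)
  next
    case (Cons b r)
    have IH: "(\<Sum>j<length v'. X ^ desL (insA v' j N) + X ^ desL (insA v' j (-N))) =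
      of_nat (2 * desL v' + 1) * X ^ desL v' + of_nat (2 * (length v' - 1 - desL v') + 1) * X ^ Suc (desL v')"
      using Cons.IH Cons.prems Cons by auto
    define c :: nat where "c = (if b < a then 1 else 0)"
    have dS: "desL (insA (a # v') (Suc j) y) = c + desL (insA v' j y)" for j y
      using insA_Cons_hd[of b r j y] unfolding insA_Suc Cons c_def by auto
    have ab: "-N < a" "a < N" "-N < b" "b < N" using Cons.prems Cons by auto
    have d0: "desL (insA (a # v') 0 N) = Suc (desL v')" "desL (insA (a # v') 0 (-N)) = Suc (desL v')"
      using ab unfolding insA_0 Cons by auto
    have da: "desL (a # v') = c + desL v'" unfolding Cons c_def by simp
    have lt: "desL v' < length v'" using desL_lt[of v'] Cons by simp
    then obtain k where k: "length v' = desL v' + k + 1" using less_imp_Suc_add by fastforce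
    have "(\<Sum>j<length (a # v'). X ^ desL (insA (a # v') j N) + X ^ desL (insA (a # v') j (-N)))
        = 2 * X ^ Suc (desL v') + (\<Sum>j<length v'. X ^ c * (X ^ desL (insA v' j N) + X ^ desL (insA v' j (-N))))"
      unfolding length_Cons sum.lessThan_Suc_shift d0 dS by (simp add: power_add algebra_simps)
    also have "\<dots> = 2 * X ^ Suc (desL v') + X ^ c * (of_nat (2 * desL v' + 1) * X ^ desL v' + of_nat (2 * (length v' - 1 - desL v') + 1) * X ^ Suc (desL v'))"
      by (simp add: IH flip: sum_distrib_left)
    also have "\<dots> = of_nat (2 * desL (a # v') + 1) * X ^ desL (a # v') + of_nat (2 * (length (a # v') - 1 - desL (a # v')) + 1) * X ^ Suc (desL (a # v'))"
      unfolding da by (cases "b < a") (simp_all add: k c_def algebra_simps)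
    finally show ?thesis .
  qed
qed





definition WW :: "nat \<Rightarrow> int list set" where
  "WW n = {w. length w = n \<and> distinct (map abs w) \<and> (\<forall>z\<in>set w. 1 \<le> \<bar>z\<bar> \<and> \<bar>z\<bar> \<le> int n)}"

lemma finite_WW: "finite (WW n)"
proof -
  have "WW n \<subseteq> {xs. set xs \<subseteq> {- int n..int n} \<and> length xs = n}"
  proof
    fix xs assume "xs \<in> WW n"
    then have "\<forall>z\<in>set xs. \<bar>z\<bar> \<le> int n" unfolding WW_def by simp
    then have "set xs \<subseteq> {- int n..int n}" by (auto simp: abs_le_iff)
    then show "xs \<in> {xs. set xs \<subseteq> {- int n..int n} \<and> length xs = n}"
      using \<open>xs \<in> WW n\<close> unfolding WW_def by simp
  qed
  moreover have "finite {xs. set xs \<subseteq> {- int n..int n} \<and> length xs = n}"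
    by (rule finite_lists_length_eq) simp
  ultimately show ?thesis by (rule finite_subset)
qed

definition insW :: "int list \<Rightarrow> nat \<Rightarrow> int \<Rightarrow> int list" where
  "insW w j y = take j w @ y # drop j w"

definition FF :: "nat \<Rightarrow> int list \<times> nat \<times> bool \<Rightarrow> int list" where
  "FF m p = (case p of (w, j, b) \<Rightarrow> insW w j (if b then int (Suc m) else - int (Suc m)))"

lemma takeWhile_insW:
  assumes "\<forall>z\<in>set w. \<bar>z\<bar> \<noteq> \<bar>y\<bar>"
  shows "takeWhile (\<lambda>z. \<bar>z\<bar> \<noteq> \<bar>y\<bar>) (insW w j y) = take j w"
proof -
  have "\<forall>z\<in>set (take j w). \<bar>z\<bar> \<noteq> \<bar>y\<bar>" using assms by (auto dest: in_set_takeD)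
  then show ?thesis unfolding insW_def by (simp add: takeWhile_append2)
qed

lemma FF_inj: "inj_on (FF m) (WW m \<times> {..<Suc m} \<times> UNIV)"
proof (rule inj_onI)
  fix p q
  assume p: "p \<in> WW m \<times> {..<Suc m} \<times> UNIV" and q: "q \<in> WW m \<times> {..<Suc m} \<times> UNIV"
    and eqpq: "FF m p = FF m q"
  obtain w j b where pw: "p = (w, j, b)" by (cases p) auto
  obtain w' j' b' where qw: "q = (w', j', b')" by (cases q) auto
  have w: "w \<in> WW m" and w': "w' \<in> WW m" and j: "j < Suc m" and j': "j' < Suc m"
    using p q pw qw by auto
  have eq: "FF m (w, j, b) = FF m (w', j', b')" using eqpq pw qw by simp
  define y where "y = (if b then int (Suc m) else - int (Suc m))"
  define y' where "y' = (if b' then int (Suc m) else - int (Suc m))"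
  have ay: "\<bar>y\<bar> = int (Suc m)" "\<bar>y'\<bar> = int (Suc m)" unfolding y_def y'_def by auto
  have eq2: "insW w j y = insW w' j' y'" using eq unfolding FF_def y_def y'_def by simp
  have nw: "\<forall>z\<in>set w. \<bar>z\<bar> \<noteq> \<bar>y\<bar>" "\<forall>z\<in>set w'. \<bar>z\<bar> \<noteq> \<bar>y'\<bar>"
    using w w' ay unfolding WW_def by force+
  have lw: "length w = m" "length w' = m" using w w' unfolding WW_def by auto
  have "take j w = take j' w'"
    using takeWhile_insW[OF nw(1), of j] takeWhile_insW[OF nw(2), of j'] eq2 ay by simp
  then have jj: "j = j'" using lw j j' by (metis length_take min.absorb2 less_Suc_eq_le)
  have tk: "take j w = take j w'" using \<open>take j w = take j' w'\<close> jj by simp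
  have "y # drop j w = y' # drop j w'" using eq2 tk jj unfolding insW_def by simp
  then have yy: "y = y'" and dd: "drop j w = drop j w'" by auto
  have "b = b'" using yy unfolding y_def y'_def by (auto split: if_splits)
  moreover have "w = w'" using tk dd by (metis append_take_drop_id)
  ultimately show "p = q" using jj pw qw by simp
qed




lemma distinct_take_nth_drop:
  assumes "distinct l" "j < length l"
  shows "l ! j \<notin> set (take j l)" "l ! j \<notin> set (drop (Suc j) l)" "distinct (take j l @ drop (Suc j) l)"
proof -
  have d: "distinct (take j l @ l ! j # drop (Suc j) l)" using assms id_take_nth_drop by metis
  then show "l ! j \<notin> set (take j l)" "l ! j \<notin> set (drop (Suc j) l)" "distinct (take j l @ drop (Suc j) l)"
    by auto
qed

lemma FF_image: "FF m ` (WW m \<times> {..<Suc m} \<times> UNIV) = WW (Suc m)"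
proof
  show "FF m ` (WW m \<times> {..<Suc m} \<times> UNIV) \<subseteq> WW (Suc m)"
  proof clarify
    fix w j b assume w: "w \<in> WW m" and j: "j < Suc m"
    define y where "y = (if b then int (Suc m) else - int (Suc m))"
    have ay: "\<bar>y\<bar> = int (Suc m)" unfolding y_def by auto
    have lw: "length w = m" and dw: "distinct (map abs w)" and bw: "\<forall>z\<in>set w. 1 \<le> \<bar>z\<bar> \<and> \<bar>z\<bar> \<le> int m"
      using w unfolding WW_def by auto
    have "distinct (map abs (take j w) @ map abs (drop j w))"
      using dw by (metis append_take_drop_id map_append)
    moreover have "\<bar>y\<bar> \<notin> abs ` set w" using bw ay by force
    moreover have "set (take j w) \<subseteq> set w" "set (drop j w) \<subseteq> set w"
      by (auto dest: in_set_takeD in_set_dropD)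
    ultimately have "distinct (map abs (insW w j y))" unfolding insW_def by auto
    moreover have "length (insW w j y) = Suc m" unfolding insW_def using lw j by simp
    moreover have "\<forall>z\<in>set (insW w j y). 1 \<le> \<bar>z\<bar> \<and> \<bar>z\<bar> \<le> int (Suc m)"
    proof
      fix z assume "z \<in> set (insW w j y)"
      then have "z \<in> set w \<or> z = y" unfolding insW_def by (auto dest: in_set_takeD in_set_dropD)
      then show "1 \<le> \<bar>z\<bar> \<and> \<bar>z\<bar> \<le> int (Suc m)"
      proof
        assume "z \<in> set w" then show ?thesis using bw by fastforce
      qed (use ay in simp)
    qed
    ultimately show "FF m (w, j, b) \<in> WW (Suc m)" unfolding WW_def FF_def y_def by simp
  qed
next
  show "WW (Suc m) \<subseteq> FF m ` (WW m \<times> {..<Suc m} \<times> UNIV)"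
  proof
    fix w assume w: "w \<in> WW (Suc m)"
    have lw: "length w = Suc m" and dw: "distinct (map abs w)" and bw: "\<forall>z\<in>set w. 1 \<le> \<bar>z\<bar> \<and> \<bar>z\<bar> \<le> int (Suc m)"
      using w unfolding WW_def by auto
    have "set (map abs w) \<subseteq> {1..int (Suc m)}" using bw by auto
    moreover have "card (set (map abs w)) = card {1..int (Suc m)}"
      using dw lw distinct_card by fastforce
    ultimately have "set (map abs w) = {1..int (Suc m)}"
      by (intro card_subset_eq) auto
    then have "int (Suc m) \<in> set (map abs w)" by simp
    then obtain j where j: "j < length w" "\<bar>w ! j\<bar> = int (Suc m)"
      by (auto simp: in_set_conv_nth)
    define a where "a = take j w @ drop (Suc j) w"
    have la: "length a = m" using lw j unfolding a_def by simp
    have dm: "distinct (map abs a)" using distinct_take_nth_drop(3)[of "map abs w" j] dw j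
      unfolding a_def by (simp add: take_map drop_map)
    have nm1: "\<bar>w ! j\<bar> \<notin> set (map abs (take j w))" "\<bar>w ! j\<bar> \<notin> set (map abs (drop (Suc j) w))"
      using distinct_take_nth_drop(1,2)[of "map abs w" j] dw j by (simp_all add: take_map drop_map)
    have ba: "\<forall>z\<in>set a. 1 \<le> \<bar>z\<bar> \<and> \<bar>z\<bar> \<le> int m"
    proof
      fix z assume z: "z \<in> set a"
      then have "z \<in> set w" unfolding a_def by (auto dest: in_set_takeD in_set_dropD)
      moreover have "\<bar>z\<bar> \<noteq> int (Suc m)" using z nm1 j unfolding a_def by force
      ultimately show "1 \<le> \<bar>z\<bar> \<and> \<bar>z\<bar> \<le> int m" using bw by fastforce
    qed
    have aW: "a \<in> WW m" using la dm ba unfolding WW_def by simp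
    define b where "b = (w ! j > 0)"
    have wj: "w ! j = (if b then int (Suc m) else - int (Suc m))" using j unfolding b_def by auto
    have ta: "take j a = take j w" "drop j a = drop (Suc j) w" unfolding a_def using j by simp_all
    have "FF m (a, j, b) = take j w @ w ! j # drop (Suc j) w"
      using ta wj by (simp add: FF_def insW_def)
    also have "\<dots> = w" using id_take_nth_drop[OF j(1)] by simp
    finally have "FF m (a, j, b) = w" .
    moreover have "(a, j, b) \<in> WW m \<times> {..<Suc m} \<times> UNIV" using aW j lw by simp
    ultimately show "w \<in> FF m ` (WW m \<times> {..<Suc m} \<times> UNIV)" by (metis image_eqI)
  qed
qed




lemma sum3: "(\<Sum>p\<in>A \<times> B \<times> C. h p) = (\<Sum>a\<in>A. \<Sum>b\<in>B. \<Sum>c\<in>C. h (a, b, c))"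
  by (simp only: sum.cartesian_product')

definition DD :: "int list \<Rightarrow> nat" where "DD w = desL (0 # w)"

lemma insW_insA: "0 # insW w j y = insA (0 # w) j y"
  unfolding insW_def insA_def by simp

lemma WW_Suc_sum: "(\<Sum>w\<in>WW (Suc m). X ^ DD w) = TT (Suc m) (\<Sum>w\<in>WW m. X ^ DD w)"
proof -
  let ?N = "int (Suc m)"
  have "(\<Sum>w\<in>WW (Suc m). X ^ DD w) = (\<Sum>p\<in>WW m \<times> {..<Suc m} \<times> UNIV. X ^ DD (FF m p))"
    unfolding FF_image[symmetric] by (rule sum.reindex[OF FF_inj, unfolded comp_def])
  also have "\<dots> = (\<Sum>w\<in>WW m. \<Sum>j<Suc m. X ^ desL (insA (0 # w) j ?N) + X ^ desL (insA (0 # w) j (- ?N)))"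
    unfolding sum3 FF_def DD_def UNIV_bool by (simp add: add.commute insW_insA)
  also have "\<dots> = (\<Sum>w\<in>WW m. TT (Suc m) (X ^ DD w))"
  proof (rule sum.cong[OF refl])
    fix w assume w: "w \<in> WW m"
    have lw: "length (0 # w) = Suc m" using w unfolding WW_def by simp
    have b: "\<forall>a\<in>set (0 # w). - ?N < a \<and> a < ?N" using w unfolding WW_def by force
    have dl: "desL (0 # w) \<le> m" using desL_lt[of "0 # w"] lw by simp
    show "(\<Sum>j<Suc m. X ^ desL (insA (0 # w) j ?N) + X ^ desL (insA (0 # w) j (- ?N))) = TT (Suc m) (X ^ DD w)"
    proof -
      have "(\<Sum>j<Suc m. X ^ desL (insA (0 # w) j ?N) + X ^ desL (insA (0 # w) j (- ?N))) =
         of_nat (2 * desL (0 # w) + 1) * X ^ desL (0 # w) + of_nat (2 * (m - desL (0 # w)) + 1) * X ^ Suc (desL (0 # w))"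
        using ins_sum[of "0 # w" ?N] b lw by simp
      also have "\<dots> = TT (Suc m) (X ^ DD w)" unfolding DD_def TT_xpow[OF dl] ..
      finally show ?thesis .
    qed
  qed
  also have "\<dots> = TT (Suc m) (\<Sum>w\<in>WW m. X ^ DD w)" by (simp add: TT_sum)
  finally show ?thesis .
qed

lemma WW_0: "WW 0 = {[]}" unfolding WW_def by auto





declare upt_Suc[simp del]

lemma desL_card: "desL v = card {i. Suc i < length v \<and> v ! Suc i < v ! i}"
proof (induction v rule: desL.induct)
  case (1 a b r)
  define B where "B = {i. Suc i < length (b # r) \<and> (b # r) ! Suc i < (b # r) ! i}"
  have fB: "finite B" by (rule finite_subset[of B "{..<length (b # r)}"]) (auto simp: B_def)
  have cB: "card (Suc ` B) = card B" by (rule card_image) simp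
  have e: "{i. Suc i < length (a # b # r) \<and> (a # b # r) ! Suc i < (a # b # r) ! i}
      = (if b < a then insert 0 (Suc ` B) else Suc ` B)"
  proof (rule set_eqI)
    fix i show "i \<in> {i. Suc i < length (a # b # r) \<and> (a # b # r) ! Suc i < (a # b # r) ! i} \<longleftrightarrow>
      i \<in> (if b < a then insert 0 (Suc ` B) else Suc ` B)"
      by (cases i) (auto simp: B_def)
  qed
  have IH: "desL (b # r) = card B" using 1 unfolding B_def .
  show ?case unfolding e using IH fB cB by simp
qed auto

abbreviation SS :: "nat \<Rightarrow> int set" where "SS n \<equiv> {- int n..int n} - {0}"

definition phi :: "nat \<Rightarrow> (int \<Rightarrow> int) \<Rightarrow> int list" where
  "phi n \<sigma> = map (\<lambda>k. \<sigma> (int k)) [1..<Suc n]"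

lemma sp_props:
  assumes "\<sigma> \<in> signed_perms n"
  shows "\<sigma> permutes SS n" "\<And>i. \<sigma> (- i) = - \<sigma> i" "\<sigma> 0 = 0"
proof -
  show p: "\<sigma> permutes SS n" and o: "\<And>i. \<sigma> (- i) = - \<sigma> i" using assms unfolding signed_perms_def by auto
  show "\<sigma> 0 = 0" using o[of 0] by simp
qed

lemma phi_nth: "i < n \<Longrightarrow> phi n \<sigma> ! i = \<sigma> (int (Suc i))"
  unfolding phi_def by simp

lemma desB_DD:
  assumes "\<sigma> \<in> signed_perms n"
  shows "desB n \<sigma> = DD (phi n \<sigma>)"
proof -
  let ?v = "0 # phi n \<sigma>"
  have lv: "length ?v = Suc n" unfolding phi_def by simp
  have vn: "i \<le> n \<Longrightarrow> ?v ! i = \<sigma> (int i)" for i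
    using sp_props(3)[OF assms] by (cases i) (auto simp: phi_nth)
  have vS: "i < n \<Longrightarrow> ?v ! Suc i = \<sigma> (int i + 1)" for i
    using phi_nth[of i n \<sigma>] by (simp add: add.commute)
  have "{i \<in> {0..<n}. \<sigma> (int i) > \<sigma> (int i + 1)} = {i. Suc i < length ?v \<and> ?v ! Suc i < ?v ! i}"
  proof (rule set_eqI)
    fix i show "i \<in> {i \<in> {0..<n}. \<sigma> (int i) > \<sigma> (int i + 1)} \<longleftrightarrow> i \<in> {i. Suc i < length ?v \<and> ?v ! Suc i < ?v ! i}"
      using vn[of i] vS[of i] lv by auto
  qed
  then show ?thesis unfolding desB_def DD_def desL_card by simp
qed

lemma phi_in_WW:
  assumes "\<sigma> \<in> signed_perms n"
  shows "phi n \<sigma> \<in> WW n"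
proof -
  note p = sp_props(1)[OF assms] and o = sp_props(2)[OF assms]
  have inS: "\<And>k. k \<in> SS n \<Longrightarrow> \<sigma> k \<in> SS n" using permutes_in_image[OF p] by blast
  have ij: "inj \<sigma>" using permutes_inj[OF p] .
  have b: "\<forall>z\<in>set (phi n \<sigma>). 1 \<le> \<bar>z\<bar> \<and> \<bar>z\<bar> \<le> int n"
  proof
    fix z assume "z \<in> set (phi n \<sigma>)"
    then obtain k where k: "k \<in> {1..<Suc n}" "z = \<sigma> (int k)" unfolding phi_def by auto
    then have "int k \<in> SS n" by auto
    then have "z \<in> SS n" using inS k by simp
    then show "1 \<le> \<bar>z\<bar> \<and> \<bar>z\<bar> \<le> int n" by auto
  qed
  have "inj_on (\<lambda>k. \<bar>\<sigma> (int k)\<bar>) {1..<Suc n}"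
  proof (rule inj_onI)
    fix a c assume a: "a \<in> {1..<Suc n}" and c: "c \<in> {1..<Suc n}" and e: "\<bar>\<sigma> (int a)\<bar> = \<bar>\<sigma> (int c)\<bar>"
    then have "\<sigma> (int a) = \<sigma> (int c) \<or> \<sigma> (int a) = \<sigma> (- int c)" using o by (auto simp: abs_eq_iff)
    then have "int a = int c \<or> int a = - int c" using injD[OF ij] by blast
    then show "a = c" using a c by auto
  qed
  then have "distinct (map abs (phi n \<sigma>))" unfolding phi_def by (simp add: distinct_map comp_def)
  moreover have "length (phi n \<sigma>) = n" unfolding phi_def by simp
  ultimately show ?thesis using b unfolding WW_def by simp
qed

definition psi :: "int list \<Rightarrow> int \<Rightarrow> int" where
  "psi w k = (if 1 \<le> \<bar>k\<bar> \<and> \<bar>k\<bar> \<le> int (length w) then sgn k * w ! (nat \<bar>k\<bar> - 1) else k)"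

lemma psi_in_sp:
  assumes w: "w \<in> WW n"
  shows "psi w \<in> signed_perms n" "phi n (psi w) = w"
proof -
  have lw: "length w = n" and dw: "distinct (map abs w)" and bw: "\<forall>z\<in>set w. 1 \<le> \<bar>z\<bar> \<and> \<bar>z\<bar> \<le> int n"
    using w unfolding WW_def by auto
  have bn: "i < n \<Longrightarrow> 1 \<le> \<bar>w ! i\<bar> \<and> \<bar>w ! i\<bar> \<le> int n" for i using bw lw by auto
  have odd: "psi w (- k) = - psi w k" for k unfolding psi_def by auto
  have into: "psi w ` SS n \<subseteq> SS n"
  proof
    fix z assume "z \<in> psi w ` SS n"
    then obtain k where k: "k \<in> SS n" "z = psi w k" by blast
    then have c: "1 \<le> \<bar>k\<bar> \<and> \<bar>k\<bar> \<le> int n" by auto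
    then have "nat \<bar>k\<bar> - 1 < n" by linarith
    from bn[OF this] have "1 \<le> \<bar>w ! (nat \<bar>k\<bar> - 1)\<bar> \<and> \<bar>w ! (nat \<bar>k\<bar> - 1)\<bar> \<le> int n" .
    moreover have "z = sgn k * w ! (nat \<bar>k\<bar> - 1)" using k c lw unfolding psi_def by simp
    moreover have "\<bar>sgn k\<bar> = 1" using c by (cases "k > 0") auto
    ultimately have "1 \<le> \<bar>z\<bar> \<and> \<bar>z\<bar> \<le> int n" by (simp add: abs_mult)
    then show "z \<in> SS n" by auto
  qed
  have inj: "inj_on (psi w) (SS n)"
  proof (rule inj_onI)
    fix a c assume a: "a \<in> SS n" and c: "c \<in> SS n" and e: "psi w a = psi w c"
    have ca: "1 \<le> \<bar>a\<bar> \<and> \<bar>a\<bar> \<le> int n" and cc: "1 \<le> \<bar>c\<bar> \<and> \<bar>c\<bar> \<le> int n" using a c by auto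
    define ia where "ia = nat \<bar>a\<bar> - 1"
    define ic where "ic = nat \<bar>c\<bar> - 1"
    have ia: "ia < n" and ic: "ic < n" using ca cc unfolding ia_def ic_def by linarith+
    have e2: "sgn a * w ! ia = sgn c * w ! ic" using e ca cc lw unfolding psi_def ia_def ic_def by simp
    have sa: "\<bar>sgn a\<bar> = 1" "\<bar>sgn c\<bar> = 1" using ca cc by (cases "a > 0"; cases "c > 0"; auto)+
    have "\<bar>w ! ia\<bar> = \<bar>w ! ic\<bar>" using arg_cong[OF e2, of abs] sa by (simp add: abs_mult)
    then have "map abs w ! ia = map abs w ! ic" using ia ic lw by simp
    then have "ia = ic" using nth_eq_iff_index_eq[OF dw] ia ic lw by simp
    then have aa: "\<bar>a\<bar> = \<bar>c\<bar>" using ca cc unfolding ia_def ic_def by linarith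
    have "w ! ia \<noteq> 0" using bn[OF ia] by auto
    then have "sgn a = sgn c" using e2 \<open>ia = ic\<close> by simp
    then show "a = c" using aa by (metis abs_sgn sgn_mult_abs)
  qed
  have bij: "bij_betw (psi w) (SS n) (SS n)"
    unfolding bij_betw_def using inj into endo_inj_surj[of "SS n" "psi w"] by auto
  have fx: "k \<notin> SS n \<Longrightarrow> psi w k = k" for k unfolding psi_def using lw by auto
  have "psi w permutes SS n" by (rule bij_imp_permutes[OF bij fx])
  then show "psi w \<in> signed_perms n" unfolding signed_perms_def using odd by auto
  show "phi n (psi w) = w"
  proof (rule nth_equalityI)
    show "length (phi n (psi w)) = length w" unfolding phi_def using lw by simp
    fix i assume "i < length (phi n (psi w))"
    then have i: "i < n" unfolding phi_def by simp
    show "phi n (psi w) ! i = w ! i" unfolding phi_nth[OF i] psi_def using i lw by (simp add: nat_add_distrib)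
  qed
qed

lemma phi_inj: "inj_on (phi n) (signed_perms n)"
proof (rule inj_onI)
  fix \<sigma> \<tau> assume s: "\<sigma> \<in> signed_perms n" and t: "\<tau> \<in> signed_perms n" and e: "phi n \<sigma> = phi n \<tau>"
  have pos: "1 \<le> k \<Longrightarrow> k \<le> int n \<Longrightarrow> \<sigma> k = \<tau> k" for k
  proof -
    assume k: "1 \<le> k" "k \<le> int n"
    have "nat k - 1 < n" using k by linarith
    then have "phi n \<sigma> ! (nat k - 1) = phi n \<tau> ! (nat k - 1)" using e by simp
    moreover have "int (Suc (nat k - 1)) = k" using k by linarith
    ultimately show "\<sigma> k = \<tau> k" using phi_nth[OF \<open>nat k - 1 < n\<close>] by metis
  qed
  show "\<sigma> = \<tau>"
  proof
    fix k
    consider "k = 0" | "1 \<le> k \<and> k \<le> int n" | "1 \<le> - k \<and> - k \<le> int n" | "k \<notin> SS n" by force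
    then show "\<sigma> k = \<tau> k"
    proof cases
      case 1 then show ?thesis using sp_props(3)[OF s] sp_props(3)[OF t] by simp
    next
      case 2 then show ?thesis using pos by simp
    next
      case 3
      then have "\<sigma> (- k) = \<tau> (- k)" using pos by simp
      then show ?thesis using sp_props(2)[OF s, of "-k"] sp_props(2)[OF t, of "-k"] by simp
    next
      case 4 then show ?thesis
        using permutes_not_in[OF sp_props(1)[OF s]] permutes_not_in[OF sp_props(1)[OF t]] by simp
    qed
  qed
qed

lemma phi_bij: "bij_betw (phi n) (signed_perms n) (WW n)"
proof -
  have "phi n ` signed_perms n = WW n"
  proof
    show "phi n ` signed_perms n \<subseteq> WW n" using phi_in_WW by blast
    show "WW n \<subseteq> phi n ` signed_perms n"
    proof
      fix w assume "w \<in> WW n"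
      then show "w \<in> phi n ` signed_perms n" using psi_in_sp[of w n] by (metis image_eqI)
    qed
  qed
  then show ?thesis unfolding bij_betw_def using phi_inj by simp
qed

lemma eulerB_WW: "eulerB n = (\<Sum>w\<in>WW n. X ^ DD w)"
proof -
  have "eulerB n = (\<Sum>\<sigma>\<in>signed_perms n. X ^ DD (phi n \<sigma>))"
    unfolding eulerB_def by (rule sum.cong) (simp_all add: desB_DD monom_altdef X_def)
  also have "\<dots> = (\<Sum>w\<in>WW n. X ^ DD w)"
    by (rule sum.reindex_bij_betw[OF phi_bij])
  finally show ?thesis .
qed

lemma eulerB_QQ: "eulerB n = QQ n"
proof (induction n)
  case 0
  have "eulerB 0 = 1" unfolding eulerB_WW WW_0 by (simp add: DD_def)
  moreover have "QQ 0 = 1" unfolding QQ_def by simp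
  ultimately show ?case by simp
next
  case (Suc m)
  then show ?case unfolding eulerB_WW WW_Suc_sum QQ_Suc by (simp add: eulerB_WW)
qed

theorem lemma2p4:
  fixes n i :: nat
  assumes "n \<ge> 1" and "1 \<le> i" and "i \<le> n div 2"
  shows "int (i + 1) * gammaB (n - 1) i \<le> gammaB n i"
proof -
  obtain m where m: "n = Suc m" using assms(1) by (cases n) auto
  have g: "gammaB k = gg k" for k by (rule eulerB_QQ_gamma[OF eulerB_QQ])
  have nn: "0 \<le> (int m + 2 - 2 * int i) * gg m (i - 1)"
  proof (cases "i - 1 > m div 2")
    case True then show ?thesis using gg_zero by simp
  next
    case False
    then have "int m + 2 - 2 * int i \<ge> 0" using assms(2) by linarith
    then show ?thesis using gg_nonneg by simp
  qed
  have "int (i + 1) * gg m i \<le> int (2*i+1) * gg m i"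
    using gg_nonneg[of m i] by (intro mult_right_mono) auto
  also have "\<dots> \<le> gg (Suc m) i"
  proof -
    have i0: "i \<noteq> 0" using assms(2) by simp
    have G: "gg (Suc m) i = int (2*i+1) * gg m i + 4 * (int m + 2 - 2 * int i) * gg m (i - 1)"
      by (subst gg.simps) (simp only: if_not_P[OF i0])
    have "0 \<le> 4 * ((int m + 2 - 2 * int i) * gg m (i - 1))" by (rule mult_nonneg_nonneg[OF _ nn]) simp
    then have nn4: "0 \<le> 4 * (int m + 2 - 2 * int i) * gg m (i - 1)" by (simp only: mult.assoc)
    show ?thesis unfolding G by (rule add_increasing2[OF nn4 order_refl])
  qed
  finally show ?thesis unfolding g m by simp
qed


end
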